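(* Let $D^k$ be a vertically mapped wedge with $J^k>0$. Define $(\bm S^k_z)_{ij,i'j'}=\int_{\widehat W}\frac{\partial\phi_{i'j'}}{\partial z}\,\ell_{ij}\,J^k$, where $\phi_{i'j'}=\ell_{i'j'}\circ(\bm\Phi^k)^{-1}$, and $\bm D^k_z=(\bm M^k)^{-1}\bm S^k_z$. Then $$\bm D^k_z=\bm L^{\mathrm{tri},k}\otimes\big(t_zJ^k\,\bm D^{\mathrm{1D}}_t\big),$$ where $t_zJ^k$ is the (constant) product of the geometric factor $t_z=\partial t/\partial z$ with $J^k$, and $\bm L^{\mathrm{tri},k}=(\bm M^{\mathrm{tri},k})^{-1}\widehat{\bm M}^{\mathrm{tri}}$.
   Context: Reference wedge $\widehat W=\widehat T\times[0,1]$ with $\widehat T=\{(r,s):r,s\ge0,\ r+s\le1\}$. Vertex functions $v_1=(1-r-s)(1-t)$, $v_2=r(1-t)$, $v_3=s(1-t)$, $v_4=(1-r-s)t$, $v_5=rt$, $v_6=st$; a wedge $D^k$ is the image of $\widehat W$ under $\bm{\Phi}^k=\sum_{i=1}^6\bm{\nu}_iv_i$ with vertices $\bm{\nu}_i\in\mathbb{R}^3$, $(x,y,z)=\bm\Phi^k(r,s,t)$, and $J^k=\det[\partial_r\bm{\Phi}^k,\partial_s\bm{\Phi}^k,\partial_t\bm{\Phi}^k]$. It is vertically mapped if the pairs $(\bm{\nu}_1,\bm{\nu}_4)$, $(\bm{\nu}_2,\bm{\nu}_5)$, $(\bm{\nu}_3,\bm{\nu}_6)$ each have identical $x$- and $y$-coordinates.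 Geometric factors $r_z=\partial r/\partial z$, $t_z=\partial t/\partial z$, etc., are entries of the inverse Jacobian matrix of $\bm\Phi^k$. Nodal basis: fix $N\ge1$, points $(r_i,s_i)$, $i=1,\dots,(N+1)(N+2)/2$, in $\widehat T$ unisolvent for polynomials of total degree $\le N$ with Lagrange basis $\ell^{\mathrm{tri}}_i$, and Gauss–Legendre–Lobatto points $0=t_0<\dots<t_N=1$ with Lagrange basis $\ell^{\mathrm{1D}}_j$; $\ell_{ij}=\ell^{\mathrm{tri}}_i(r,s)\ell^{\mathrm{1D}}_j(t)$. Matrices indexed by $(i,j)$ are ordered with $i$ the slow index, so $(\bm A\otimes\bm B)_{ij,i'j'}=\bm A_{ii'}\bm B_{jj'}$. Definitions: $(\bm M^k)_{ij,i'j'}=\int_{\widehat W}\ell_{ij}\ell_{i'j'}J^k$; $(\bm M^{\mathrm{tri},k})_{ii'}=\int_{\widehat T}\ell^{\mathrm{tri}}_i\ell^{\mathrm{tri}}_{i'}J^k(r,s)$ (where $J^k$ is independent of $t$ for vertically mapped wedges); $(\widehat{\bm M}^{\mathrm{tri}})_{ii'}=\int_{\widehat T}\ell^{\mathrm{tri}}_i\ell^{\mathrm{tri}}_{i'}$; $(\bm D^{\mathrm{1D}}_t)_{jj'}=(\ell^{\mathrm{1D}}_{j'})'(t_j)$. *)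

theory Defs
  imports "HOL-Analysis.Analysis" "HOL-Computational_Algebra.Polynomial"
begin

definition ref_tri :: "(real^2) set" where
  "ref_tri = {p. p$1 \<ge> 0 \<and> p$2 \<ge> 0 \<and> p$1 + p$2 \<le> 1}"

definition ref_wedge :: "(real^3) set" where
  "ref_wedge = {p. p$1 \<ge> 0 \<and> p$2 \<ge> 0 \<and> p$1 + p$2 \<le> 1 \<and> 0 \<le> p$3 \<and> p$3 \<le> 1}"

definition vfun :: "nat \<Rightarrow> real^3 \<Rightarrow> real" where
  "vfun i p = (let r = p$1; s = p$2; t = p$3 in
     (if i = 1 then (1 - r - s) * (1 - t) else
      if i = 2 then r * (1 - t) else
      if i = 3 then s * (1 - t) else
      if i = 4 then (1 - r - s) * t else
      if i = 5 then r * t else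
      if i = 6 then s * t else 0))"

definition wedge_map :: "(nat \<Rightarrow> real^3) \<Rightarrow> real^3 \<Rightarrow> real^3" where
  "wedge_map \<nu> p = (\<Sum>i\<in>{1..6}. vfun i p *\<^sub>R \<nu> i)"

definition vertically_mapped :: "(nat \<Rightarrow> real^3) \<Rightarrow> bool" where
  "vertically_mapped \<nu> \<longleftrightarrow>
     (\<forall>i\<in>{1,2,3}. (\<nu> i)$1 = (\<nu> (i+3))$1 \<and> (\<nu> i)$2 = (\<nu> (i+3))$2)"

definition wedge_J :: "(nat \<Rightarrow> real^3) \<Rightarrow> real^3 \<Rightarrow> real" where
  "wedge_J \<nu> p = det (jacobian (wedge_map \<nu>) (at p))"

text \<open>Geometric factor t_z = dt/dz: entry (t,z) of the inverse Jacobian matrix.\<close>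
definition geo_tz :: "(nat \<Rightarrow> real^3) \<Rightarrow> real^3 \<Rightarrow> real" where
  "geo_tz \<nu> p = (matrix_inv (jacobian (wedge_map \<nu>) (at p))) $ 3 $ 3"

definition pdz :: "(real^3 \<Rightarrow> real) \<Rightarrow> real^3 \<Rightarrow> real" where
  "pdz f q = deriv (\<lambda>z. f (\<chi> k. if k = 3 then z else q $ k)) (q $ 3)"

definition poly2_deg_le :: "nat \<Rightarrow> (real \<Rightarrow> real \<Rightarrow> real) \<Rightarrow> bool" where
  "poly2_deg_le N f \<longleftrightarrow> (\<exists>c :: nat \<Rightarrow> nat \<Rightarrow> real.
     \<forall>r s. f r s = (\<Sum>(a,b)\<in>{(a,b). a + b \<le> N}. c a b * r ^ a * s ^ b))"

definition ntri :: "nat \<Rightarrow> nat" where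
  "ntri N = (N + 1) * (N + 2) div 2"

definition unisolvent_tri :: "nat \<Rightarrow> (nat \<Rightarrow> real) \<Rightarrow> (nat \<Rightarrow> real) \<Rightarrow> bool" where
  "unisolvent_tri N pr ps \<longleftrightarrow>
     (\<forall>i\<in>{1..ntri N}. pr i \<ge> 0 \<and> ps i \<ge> 0 \<and> pr i + ps i \<le> 1) \<and>
     (\<forall>f. poly2_deg_le N f \<and> (\<forall>i\<in>{1..ntri N}. f (pr i) (ps i) = 0) \<longrightarrow> (\<forall>r s. f r s = 0))"

definition lagrange_tri :: "nat \<Rightarrow> (nat \<Rightarrow> real) \<Rightarrow> (nat \<Rightarrow> real) \<Rightarrow> (nat \<Rightarrow> real \<Rightarrow> real \<Rightarrow> real) \<Rightarrow> bool" where
  "lagrange_tri N pr ps ltri \<longleftrightarrow>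
     (\<forall>i\<in>{1..ntri N}. poly2_deg_le N (ltri i) \<and>
        (\<forall>i'\<in>{1..ntri N}. ltri i (pr i') (ps i') = (if i = i' then 1 else 0)))"

text \<open>Gauss-Legendre-Lobatto points on [0,1]: 0 = t_0 < ... < t_N = 1, interior points are the
  images under xi -> (xi+1)/2 of the roots of P_N', P_N the Legendre polynomial
  (Rodrigues: P_N proportional to the N-th derivative of (x^2-1)^N).\<close>
definition gll_points :: "nat \<Rightarrow> (nat \<Rightarrow> real) \<Rightarrow> bool" where
  "gll_points N tt \<longleftrightarrow>
     tt 0 = 0 \<and> tt N = 1 \<and> (\<forall>j<N. tt j < tt (Suc j)) \<and>
     (\<forall>j. 0 < j \<and> j < N \<longrightarrow>
        poly (pderiv ((pderiv ^^ N) ([:-1, 0, 1:] ^ N))) (2 * tt j - 1) = 0)"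

definition lagrange_1d :: "nat \<Rightarrow> (nat \<Rightarrow> real) \<Rightarrow> (nat \<Rightarrow> real poly) \<Rightarrow> bool" where
  "lagrange_1d N tt l1 \<longleftrightarrow>
     (\<forall>j\<in>{0..N}. degree (l1 j) \<le> N \<and>
        (\<forall>j'\<in>{0..N}. poly (l1 j) (tt j') = (if j = j' then 1 else 0)))"

definition lwedge :: "(nat \<Rightarrow> real \<Rightarrow> real \<Rightarrow> real) \<Rightarrow> (nat \<Rightarrow> real poly) \<Rightarrow> nat \<times> nat \<Rightarrow> real^3 \<Rightarrow> real" where
  "lwedge ltri l1 ij p = ltri (fst ij) (p$1) (p$2) * poly (l1 (snd ij)) (p$3)"

text \<open>Matrices are functions of (row, column) index; only entries in I x I matter.\<close>
definition mprod :: "'i set \<Rightarrow> ('i \<Rightarrow> 'i \<Rightarrow> real) \<Rightarrow> ('i \<Rightarrow> 'i \<Rightarrow> real) \<Rightarrow> 'i \<Rightarrow> 'i \<Rightarrow> real" where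
  "mprod I A B = (\<lambda>a c. \<Sum>b\<in>I. A a b * B b c)"

definition is_minv :: "'i set \<Rightarrow> ('i \<Rightarrow> 'i \<Rightarrow> real) \<Rightarrow> ('i \<Rightarrow> 'i \<Rightarrow> real) \<Rightarrow> bool" where
  "is_minv I A B \<longleftrightarrow> (\<forall>a\<in>I. \<forall>c\<in>I.
      mprod I A B a c = (if a = c then 1 else 0) \<and> mprod I B A a c = (if a = c then 1 else 0))"

definition minv :: "'i set \<Rightarrow> ('i \<Rightarrow> 'i \<Rightarrow> real) \<Rightarrow> 'i \<Rightarrow> 'i \<Rightarrow> real" where
  "minv I A = (\<lambda>a c. if a \<in> I \<and> c \<in> I then (SOME B. is_minv I A B) a c else 0)"

definition kron :: "(nat \<Rightarrow> nat \<Rightarrow> real) \<Rightarrow> (nat \<Rightarrow> nat \<Rightarrow> real) \<Rightarrow> nat \<times> nat \<Rightarrow> nat \<times> nat \<Rightarrow> real" where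
  "kron A B = (\<lambda>(i,j) (i',j'). A i i' * B j j')"

definition mass_wedge where
  "mass_wedge \<nu> ltri l1 = (\<lambda>ij ij'. integral ref_wedge
      (\<lambda>p. lwedge ltri l1 ij p * lwedge ltri l1 ij' p * wedge_J \<nu> p))"

text \<open>J^k(r,s) for vertically mapped wedges (independent of t); evaluated at t = 0.\<close>
definition mass_tri where
  "mass_tri \<nu> ltri = (\<lambda>i i'. integral ref_tri
      (\<lambda>q. ltri i (q$1) (q$2) * ltri i' (q$1) (q$2) * wedge_J \<nu> (vector [q$1, q$2, 0])))"

definition mass_ref_tri where
  "mass_ref_tri ltri = (\<lambda>i i'. integral ref_tri (\<lambda>q. ltri i (q$1) (q$2) * ltri i' (q$1) (q$2)))"

definition D1d where
  "D1d tt l1 = (\<lambda>j j'. poly (pderiv (l1 j')) (tt j))"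

definition phys_basis where
  "phys_basis \<nu> ltri l1 ij = (\<lambda>x. lwedge ltri l1 ij (inv_into ref_wedge (wedge_map \<nu>) x))"

definition stiff_z where
  "stiff_z \<nu> ltri l1 = (\<lambda>ij ij'. integral ref_wedge
      (\<lambda>p. pdz (phys_basis \<nu> ltri l1 ij') (wedge_map \<nu> p) * lwedge ltri l1 ij p * wedge_J \<nu> p))"

definition wedge_idx :: "nat \<Rightarrow> (nat \<times> nat) set" where
  "wedge_idx N = {1..ntri N} \<times> {0..N}"

end

theory Submission
  imports Defs "Jordan_Normal_Form.Determinant"
begin



lemma minv_exists:
  fixes A :: "'i \<Rightarrow> 'i \<Rightarrow> real"
  assumes fin: "finite I"
    and inj: "\<And>v. (\<forall>a\<in>I. (\<Sum>b\<in>I. A a b * v b) = 0) \<Longrightarrow> (\<forall>b\<in>I. v b = 0)"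
  shows "\<exists>B. is_minv I A B"
proof -
  define n where "n = card I"
  obtain f where bij: "bij_betw f {0..<n} I"
    using ex_bij_betw_nat_finite[OF fin] n_def by blast
  define g where "g = inv_into {0..<n} f"
  have fg: "\<And>a. a \<in> I \<Longrightarrow> f (g a) = a" and gI: "\<And>a. a \<in> I \<Longrightarrow> g a < n"
    and gf: "\<And>i. i < n \<Longrightarrow> g (f i) = i" and fI: "\<And>i. i < n \<Longrightarrow> f i \<in> I"
    using bij unfolding g_def bij_betw_def
    by (auto simp: f_inv_into_f inv_into_into inv_into_f_f)
  define Am :: "real Matrix.mat" where "Am = Matrix.mat n n (\<lambda>(i,j). A (f i) (f j))"
  have Am: "Am \<in> carrier_mat n n" by (simp add: Am_def)
  have reidx: "\<And>h. (\<Sum>b\<in>I. h b) = (\<Sum>j\<in>{0..<n}. h (f j))"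
    using sum.reindex_bij_betw[OF bij] by metis
  have "Determinant.det Am \<noteq> 0"
  proof
    assume "Determinant.det Am = 0"
    then obtain v where v: "v \<in> carrier_vec n" "v \<noteq> 0\<^sub>v n" "Am *\<^sub>v v = 0\<^sub>v n"
      using det_0_iff_vec_prod_zero_field[OF Am] by blast
    define w where "w b = v $ (g b)" for b
    have "\<forall>a\<in>I. (\<Sum>b\<in>I. A a b * w b) = 0"
    proof
      fix a assume a: "a \<in> I"
      have "(\<Sum>b\<in>I. A a b * w b) = (\<Sum>j\<in>{0..<n}. A a (f j) * v $ j)"
        by (subst reidx) (simp add: w_def gf)
      also have "\<dots> = (Am *\<^sub>v v) $ (g a)"
        using v(1) gI[OF a] by (simp add: Am_def scalar_prod_def fg[OF a])
      also have "\<dots> = 0" using v(3) gI[OF a] by simp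
      finally show "(\<Sum>b\<in>I. A a b * w b) = 0" .
    qed
    then have "\<forall>b\<in>I. w b = 0" by (rule inj)
    then have "v = 0\<^sub>v n"
    proof (intro eq_vecI)
      fix i assume "\<forall>b\<in>I. w b = 0" "i < dim_vec (0\<^sub>v n :: real Matrix.vec)"
      then show "v $ i = 0\<^sub>v n $ i" using fI[of i] gf[of i] by (auto simp: w_def)
    qed (use v(1) in auto)
    with v(2) show False by simp
  qed
  then have "Am \<in> Units (ring_mat TYPE(real) n ())"
    by (rule det_non_zero_imp_unit[OF Am])
  then obtain Bm where Bm: "Bm \<in> carrier_mat n n" "Bm * Am = 1\<^sub>m n" "Am * Bm = 1\<^sub>m n"
    by (auto simp: Units_def ring_mat_def)
  define B where "B a c = Bm $$ (g a, g c)" for a c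
  have "is_minv I A B"
    unfolding is_minv_def
  proof (intro ballI conjI)
    fix a c assume a: "a \<in> I" and c: "c \<in> I"
    have "mprod I A B a c = (\<Sum>j\<in>{0..<n}. A a (f j) * Bm $$ (j, g c))"
      unfolding mprod_def by (subst reidx) (simp add: B_def gf)
    also have "\<dots> = (\<Sum>j\<in>{0..<n}. Am $$ (g a, j) * Bm $$ (j, g c))"
      using gI[OF a] by (intro sum.cong) (auto simp: Am_def fg[OF a])
    also have "\<dots> = (Am * Bm) $$ (g a, g c)"
      using Bm(1) Am gI[OF a] gI[OF c] by (subst index_mult_mat(1)) (auto simp: scalar_prod_def)
    also have "\<dots> = (if g a = g c then 1 else 0)"
      unfolding Bm(3) using gI[OF a] gI[OF c] by (simp only: index_one_mat)
    also have "\<dots> = (if a = c then 1 else 0)"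
      using fg[OF a] fg[OF c] by metis
    finally show "mprod I A B a c = (if a = c then 1 else 0)" .
    have "mprod I B A a c = (\<Sum>j\<in>{0..<n}. Bm $$ (g a, j) * A (f j) c)"
      unfolding mprod_def by (subst reidx) (simp add: B_def gf)
    also have "\<dots> = (\<Sum>j\<in>{0..<n}. Bm $$ (g a, j) * Am $$ (j, g c))"
      using gI[OF c] by (intro sum.cong) (auto simp: Am_def fg[OF c])
    also have "\<dots> = (Bm * Am) $$ (g a, g c)"
      using Bm(1) Am gI[OF a] gI[OF c] by (subst index_mult_mat(1)) (auto simp: scalar_prod_def)
    also have "\<dots> = (if g a = g c then 1 else 0)"
      unfolding Bm(2) using gI[OF a] gI[OF c] by (simp only: index_one_mat)
    also have "\<dots> = (if a = c then 1 else 0)"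
      using fg[OF a] fg[OF c] by metis
    finally show "mprod I B A a c = (if a = c then 1 else 0)" .
  qed
  then show ?thesis by blast
qed



no_notation Matrix.vec_index (infixl "$" 100)



lemma mprod_assoc:
  assumes "finite I"
  shows "mprod I (mprod I A B) C a c = mprod I A (mprod I B C) a c"
  unfolding mprod_def
  by (simp add: sum_distrib_left sum_distrib_right mult.assoc) (rule sum.swap)

lemma is_minv_unique:
  assumes fin: "finite I" and B: "is_minv I A B" and B': "is_minv I A B'"
    and a: "a \<in> I" and c: "c \<in> I"
  shows "B a c = B' a c"
proof -
  have h1: "mprod I (mprod I B A) B' a c = B' a c"
  proof -
    have "mprod I (mprod I B A) B' a c = (\<Sum>b\<in>I. (if a = b then B' b c else 0))"
      unfolding mprod_def[of I "mprod I B A"] using B a by (intro sum.cong) (auto simp: is_minv_def)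
    also have "\<dots> = B' a c" using a fin by simp
    finally show ?thesis .
  qed
  have h2: "mprod I B (mprod I A B') a c = B a c"
  proof -
    have "mprod I B (mprod I A B') a c = (\<Sum>b\<in>I. (if b = c then B a b else 0))"
      unfolding mprod_def[of I B] using B' c by (intro sum.cong) (auto simp: is_minv_def)
    also have "\<dots> = B a c" using c fin by simp
    finally show ?thesis .
  qed
  show ?thesis using h1 h2 mprod_assoc[OF fin, of B A B' a c] by simp
qed

lemma minv_eq:
  assumes fin: "finite I" and B: "is_minv I A B" and a: "a \<in> I" and c: "c \<in> I"
  shows "minv I A a c = B a c"
proof -
  have "is_minv I A (SOME B. is_minv I A B)" using someI[of "is_minv I A" B] B by blast
  then show ?thesis unfolding minv_def using a c is_minv_unique[OF fin _ B a c] by simp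
qed

lemma mprod_kron:
  assumes "finite I" "finite J"
  shows "mprod (I \<times> J) (kron A B) (kron C D) (i,j) (i',j') = mprod I A C i i' * mprod J B D j j'"
proof -
  have "mprod I A C i i' * mprod J B D j j' = (\<Sum>x\<in>I. \<Sum>y\<in>J. (A i x * C x i') * (B j y * D y j'))"
    unfolding mprod_def by (simp add: sum_product)
  also have "\<dots> = (\<Sum>(x,y)\<in>I \<times> J. (A i x * C x i') * (B j y * D y j'))"
    by (rule sum.cartesian_product)
  also have "\<dots> = mprod (I \<times> J) (kron A B) (kron C D) (i,j) (i',j')"
    unfolding mprod_def kron_def by (intro sum.cong) (auto simp: mult_ac)
  finally show ?thesis by simp
qed

lemma is_minv_kron:
  assumes "finite I" "finite J" "is_minv I A A'" "is_minv J B B'"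
  shows "is_minv (I \<times> J) (kron A B) (kron A' B')"
  unfolding is_minv_def
proof (intro ballI)
  fix a c assume "a \<in> I \<times> J" "c \<in> I \<times> J"
  then obtain i j i' j' where "a = (i,j)" "c = (i',j')" "i \<in> I" "j \<in> J" "i' \<in> I" "j' \<in> J" by auto
  then show "mprod (I \<times> J) (kron A B) (kron A' B') a c = (if a = c then 1 else 0) \<and>
             mprod (I \<times> J) (kron A' B') (kron A B) a c = (if a = c then 1 else 0)"
    using assms by (simp add: mprod_kron is_minv_def)
qed

lemma mprod_cong:
  assumes "\<And>b. b \<in> I \<Longrightarrow> A a b = A' a b" "\<And>b. b \<in> I \<Longrightarrow> B b c = B' b c"
  shows "mprod I A B a c = mprod I A' B' a c"
  unfolding mprod_def using assms by simp

lemma minv_cong: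
  assumes "\<And>a c. a \<in> I \<Longrightarrow> c \<in> I \<Longrightarrow> A a c = A' a c"
  shows "minv I A = minv I A'"
proof -
  have "is_minv I A B = is_minv I A' B" for B
    unfolding is_minv_def mprod_def using assms by (auto intro!: sum.cong ball_cong)
  then have e: "is_minv I A = is_minv I A'" by (rule ext)
  show ?thesis unfolding minv_def e ..
qed





definition Wf :: "(nat \<Rightarrow> real^3) \<Rightarrow> real^3 \<Rightarrow> real^3" where
  "Wf \<nu> p = ((1 - p$1 - p$2) * (1 - p$3)) *\<^sub>R \<nu> 1 + (p$1 * (1 - p$3)) *\<^sub>R \<nu> 2
     + (p$2 * (1 - p$3)) *\<^sub>R \<nu> 3 + ((1 - p$1 - p$2) * p$3) *\<^sub>R \<nu> 4
     + (p$1 * p$3) *\<^sub>R \<nu> 5 + (p$2 * p$3) *\<^sub>R \<nu> 6"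

definition WL :: "(nat \<Rightarrow> real^3) \<Rightarrow> real^3 \<Rightarrow> real^3 \<Rightarrow> real^3" where
  "WL \<nu> p h = (-(h$1+h$2)*(1-p$3) - (1-p$1-p$2)*h$3) *\<^sub>R \<nu> 1 + (h$1*(1-p$3) - p$1*h$3) *\<^sub>R \<nu> 2
     + (h$2*(1-p$3) - p$2*h$3) *\<^sub>R \<nu> 3 + (-(h$1+h$2)*p$3 + (1-p$1-p$2)*h$3) *\<^sub>R \<nu> 4
     + (h$1*p$3 + p$1*h$3) *\<^sub>R \<nu> 5 + (h$2*p$3 + p$2*h$3) *\<^sub>R \<nu> 6"

lemma set16: "{1..6::nat} = {1,2,3,4,5,6}" by (simp add: numeral_eq_Suc atLeastAtMostSuc_conv insert_commute)

lemma sum6: "(\<Sum>i\<in>{1,2,3,4,5,6::nat}. f i) = f 1 + f 2 + f 3 + f 4 + f 5 + (f 6::real^3)" by (simp add: add.assoc)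
lemma vfun_simps: "vfun 1 p = (1 - p$1 - p$2) * (1 - p$3)" "vfun 2 p = p$1 * (1 - p$3)"
  "vfun 3 p = p$2 * (1 - p$3)" "vfun 4 p = (1 - p$1 - p$2) * p$3" "vfun 5 p = p$1 * p$3" "vfun 6 p = p$2 * p$3"
  by (simp_all add: vfun_def Let_def)

lemma wedge_map_eq: "wedge_map \<nu> = Wf \<nu>"
proof
  fix p
  show "wedge_map \<nu> p = Wf \<nu> p" unfolding wedge_map_def set16 sum6 Wf_def vfun_simps ..
qed
lemma has_derivative_vec_nth'[derivative_intros]: "((\<lambda>x::real^'n. x $ i) has_derivative (\<lambda>x. x $ i)) F"
  by (rule bounded_linear_imp_has_derivative) (rule bounded_linear_vec_nth)

lemma Wf_deriv: "(Wf \<nu> has_derivative WL \<nu> p) (at p within S)"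
  unfolding Wf_def[abs_def] WL_def[abs_def]
  apply (rule has_derivative_eq_rhs)
   apply (rule has_derivative_add has_derivative_scaleR_left has_derivative_mult has_derivative_diff
      has_derivative_const has_derivative_vec_nth')+
  apply (auto simp: fun_eq_iff algebra_simps)
  done

definition detB :: "(nat \<Rightarrow> real^3) \<Rightarrow> real" where
  "detB \<nu> = (\<nu> 2$1 - \<nu> 1$1) * (\<nu> 3$2 - \<nu> 1$2) - (\<nu> 3$1 - \<nu> 1$1) * (\<nu> 2$2 - \<nu> 1$2)"

definition hh :: "(nat \<Rightarrow> real^3) \<Rightarrow> real \<Rightarrow> real \<Rightarrow> real" where
  "hh \<nu> r s = (1 - r - s) * (\<nu> 4$3 - \<nu> 1$3) + r * (\<nu> 5$3 - \<nu> 2$3) + s * (\<nu> 6$3 - \<nu> 3$3)"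

lemma vm_simps:
  assumes "vertically_mapped \<nu>"
  shows "\<nu> 4 $ 1 = \<nu> 1 $ 1" "\<nu> 4 $ 2 = \<nu> 1 $ 2" "\<nu> 5 $ 1 = \<nu> 2 $ 1" "\<nu> 5 $ 2 = \<nu> 2 $ 2"
    "\<nu> 6 $ 1 = \<nu> 3 $ 1" "\<nu> 6 $ 2 = \<nu> 3 $ 2"
  using assms unfolding vertically_mapped_def by (auto dest: bspec[where x=1] bspec[where x=2] bspec[where x=3])

lemma jac_eq: "jacobian (wedge_map \<nu>) (at p) = matrix (WL \<nu> p)"
proof -
  have "WL \<nu> p = frechet_derivative (Wf \<nu>) (at p)" by (rule frechet_derivative_at[OF Wf_deriv])
  then show ?thesis by (simp add: jacobian_def wedge_map_eq)
qed

lemma jac_entries: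
  fixes p :: "real^3"
  assumes vm: "vertically_mapped \<nu>"
  defines "A \<equiv> jacobian (wedge_map \<nu>) (at p)"
  shows "A$1$1 = \<nu> 2$1 - \<nu> 1$1" "A$1$2 = \<nu> 3$1 - \<nu> 1$1" "A$1$3 = 0"
    "A$2$1 = \<nu> 2$2 - \<nu> 1$2" "A$2$2 = \<nu> 3$2 - \<nu> 1$2" "A$2$3 = 0"
    "A$3$3 = hh \<nu> (p$1) (p$2)"
  unfolding A_def jac_eq matrix_def WL_def hh_def using vm_simps[OF vm]
  by (simp_all add: axis_def algebra_simps)

lemma wedge_J_eq:
  assumes vm: "vertically_mapped \<nu>"
  shows "wedge_J \<nu> p = detB \<nu> * hh \<nu> (p$1) (p$2)"
  unfolding wedge_J_def Determinants.det_3 jac_entries[OF vm]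
  by (simp add: detB_def algebra_simps)

lemma geo_tz_eq:
  assumes vm: "vertically_mapped \<nu>" and J: "wedge_J \<nu> p \<noteq> 0"
  shows "geo_tz \<nu> p = 1 / hh \<nu> (p$1) (p$2)"
proof -
  define A where "A = jacobian (wedge_map \<nu>) (at p)"
  have "invertible A" using J unfolding A_def wedge_J_def by (simp add: invertible_det_nz)
  then have "\<exists>A'. A ** A' = Finite_Cartesian_Product.mat 1 \<and> A' ** A = Finite_Cartesian_Product.mat 1"
    unfolding invertible_def by blast
  then have inv: "matrix_inv A ** A = Finite_Cartesian_Product.mat 1"
    unfolding matrix_inv_def by (metis (mono_tags, lifting) someI_ex)
  have "1 = (matrix_inv A ** A) $ 3 $ 3" unfolding inv by (simp add: Finite_Cartesian_Product.mat_def)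
  also have "\<dots> = matrix_inv A $ 3 $ 3 * A $ 3 $ 3"
    unfolding matrix_matrix_mult_def sum_3 using jac_entries[OF vm, of p] by (simp add: A_def)
  finally have "matrix_inv A $ 3 $ 3 * hh \<nu> (p$1) (p$2) = 1"
    using jac_entries[OF vm, of p] by (simp add: A_def)
  then show ?thesis unfolding geo_tz_def A_def[symmetric]
    by (metis divide_eq_eq mult_zero_right zero_neq_one)
qed

definition zb :: "(nat \<Rightarrow> real^3) \<Rightarrow> real \<Rightarrow> real \<Rightarrow> real" where
  "zb \<nu> r s = (1 - r - s) * \<nu> 1$3 + r * \<nu> 2$3 + s * \<nu> 3$3"

lemma Wf_comp:
  assumes vm: "vertically_mapped \<nu>"
  shows "Wf \<nu> p $ 1 = \<nu> 1$1 + p$1 * (\<nu> 2$1 - \<nu> 1$1) + p$2 * (\<nu> 3$1 - \<nu> 1$1)"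
    "Wf \<nu> p $ 2 = \<nu> 1$2 + p$1 * (\<nu> 2$2 - \<nu> 1$2) + p$2 * (\<nu> 3$2 - \<nu> 1$2)"
    "Wf \<nu> p $ 3 = zb \<nu> (p$1) (p$2) + p$3 * hh \<nu> (p$1) (p$2)"
  unfolding Wf_def zb_def hh_def using vm_simps[OF vm] by (simp_all add: algebra_simps)

lemma ref_wedge_J:
  assumes vm: "vertically_mapped \<nu>" and Jpos: "\<forall>p\<in>ref_wedge. wedge_J \<nu> p > 0"
    and rs: "r \<ge> 0" "s \<ge> 0" "r + s \<le> 1"
  shows "detB \<nu> * hh \<nu> r s > 0"
proof -
  have "(vector [r, s, 0] :: real^3) \<in> ref_wedge" using rs by (simp add: ref_wedge_def)
  from Jpos[rule_format, OF this] show ?thesis by (simp add: wedge_J_eq[OF vm])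
qed

lemma detB_ne0:
  assumes vm: "vertically_mapped \<nu>" and Jpos: "\<forall>p\<in>ref_wedge. wedge_J \<nu> p > 0"
  shows "detB \<nu> \<noteq> 0"
  using ref_wedge_J[OF vm Jpos, of 0 0] by auto

lemma hh_ne0:
  assumes vm: "vertically_mapped \<nu>" and Jpos: "\<forall>p\<in>ref_wedge. wedge_J \<nu> p > 0"
    and rs: "r \<ge> 0" "s \<ge> 0" "r + s \<le> 1"
  shows "hh \<nu> r s \<noteq> 0"
  using ref_wedge_J[OF vm Jpos rs] by auto

lemma wedge_inj:
  assumes vm: "vertically_mapped \<nu>" and Jpos: "\<forall>p\<in>ref_wedge. wedge_J \<nu> p > 0"
  shows "inj_on (wedge_map \<nu>) ref_wedge"
proof
  fix p q assume p: "p \<in> ref_wedge" and q: "q \<in> ref_wedge" and e: "wedge_map \<nu> p = wedge_map \<nu> q"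
  have e1: "Wf \<nu> p $ 1 = Wf \<nu> q $ 1" and e2: "Wf \<nu> p $ 2 = Wf \<nu> q $ 2" and e3: "Wf \<nu> p $ 3 = Wf \<nu> q $ 3"
    using e by (simp_all add: wedge_map_eq)
  define a where "a = \<nu> 2$1 - \<nu> 1$1"
  define b where "b = \<nu> 3$1 - \<nu> 1$1"
  define c where "c = \<nu> 2$2 - \<nu> 1$2"
  define d where "d = \<nu> 3$2 - \<nu> 1$2"
  have D: "a * d - b * c \<noteq> 0" using detB_ne0[OF vm Jpos] by (simp add: detB_def a_def b_def c_def d_def)
  have l1: "(p$1 - q$1) * a + (p$2 - q$2) * b = 0" using e1 unfolding Wf_comp[OF vm] a_def b_def by (simp add: algebra_simps)
  have l2: "(p$1 - q$1) * c + (p$2 - q$2) * d = 0" using e2 unfolding Wf_comp[OF vm] c_def d_def by (simp add: algebra_simps)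
  have "(p$1 - q$1) * (a * d - b * c) = 0"
  proof -
    have "(p$1 - q$1) * (a * d - b * c) = d * ((p$1 - q$1) * a + (p$2 - q$2) * b) - b * ((p$1 - q$1) * c + (p$2 - q$2) * d)"
      by (simp add: algebra_simps)
    then show ?thesis using l1 l2 by simp
  qed
  then have r: "p$1 = q$1" using D by simp
  have "(p$2 - q$2) * (a * d - b * c) = 0"
  proof -
    have "(p$2 - q$2) * (a * d - b * c) = a * ((p$1 - q$1) * c + (p$2 - q$2) * d) - c * ((p$1 - q$1) * a + (p$2 - q$2) * b)"
      by (simp add: algebra_simps)
    then show ?thesis using l1 l2 by simp
  qed
  then have s: "p$2 = q$2" using D by simp
  have H: "hh \<nu> (p$1) (p$2) \<noteq> 0" using hh_ne0[OF vm Jpos] p by (simp add: ref_wedge_def)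
  have "p$3 * hh \<nu> (p$1) (p$2) = q$3 * hh \<nu> (p$1) (p$2)" using e3 unfolding Wf_comp[OF vm] r s by simp
  then have t: "p$3 = q$3" using H by simp
  show "p = q" unfolding Finite_Cartesian_Product.vec_eq_iff forall_3 using r s t by simp
qed

lemma pdz_phys:
  assumes vm: "vertically_mapped \<nu>" and Jpos: "\<forall>p\<in>ref_wedge. wedge_J \<nu> p > 0"
    and p: "p \<in> ref_wedge" and t0: "0 < p$3" and t1: "p$3 < 1"
  shows "pdz (phys_basis \<nu> ltri l1 (i,j)) (wedge_map \<nu> p)
         = ltri i (p$1) (p$2) * poly (pderiv (l1 j)) (p$3) / hh \<nu> (p$1) (p$2)"
proof -
  define q where "q = wedge_map \<nu> p"
  define H where "H = hh \<nu> (p$1) (p$2)"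
  have H: "H \<noteq> 0" using hh_ne0[OF vm Jpos] p by (simp add: ref_wedge_def H_def)
  define P where "P z = (\<chi> k. if k = 3 then p$3 + (z - q$3) / H else p$k)" for z
  define U where "U = {z. 0 < p$3 + (z - q$3) / H \<and> p$3 + (z - q$3) / H < 1}"
  have P1: "P z $ 1 = p$1" and P2: "P z $ 2 = p$2" and P3: "P z $ 3 = p$3 + (z - q$3) / H" for z
    by (simp_all add: P_def)
  have q3: "q$3 = zb \<nu> (p$1) (p$2) + p$3 * H"
    by (simp add: q_def wedge_map_eq Wf_comp[OF vm] H_def)
  have oU: "open U" unfolding U_def
    using H by (intro open_Collect_conj open_Collect_less continuous_intros) auto
  have qU: "q$3 \<in> U" using t0 t1 by (simp add: U_def)
  have eq: "phys_basis \<nu> ltri l1 (i,j) (\<chi> k. if k = 3 then z else q $ k)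
       = ltri i (p$1) (p$2) * poly (l1 j) (p$3 + (z - q$3) / H)" if z: "z \<in> U" for z
  proof -
    have PW: "P z \<in> ref_wedge" using p z by (simp add: ref_wedge_def P1 P2 P3 U_def)
    have "wedge_map \<nu> (P z) = (\<chi> k. if k = 3 then z else q $ k)"
      unfolding Finite_Cartesian_Product.vec_eq_iff forall_3 using H
      by (simp add: wedge_map_eq Wf_comp[OF vm] P1 P2 P3 q_def q3 field_simps)
        (simp add: q3 H_def)
    then have "inv_into ref_wedge (wedge_map \<nu>) (\<chi> k. if k = 3 then z else q $ k) = P z"
      using inv_into_f_f[OF wedge_inj[OF vm Jpos] PW] by simp
    then show ?thesis by (simp add: phys_basis_def lwedge_def P1 P2 P3)
  qed
  have Dg: "((\<lambda>z. ltri i (p$1) (p$2) * poly (l1 j) (p$3 + (z - q$3) / H)) has_field_derivative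
       ltri i (p$1) (p$2) * (poly (pderiv (l1 j)) (p$3 + (q$3 - q$3) / H) * (1 / H))) (at (q$3))"
    using H by (intro DERIV_cmult DERIV_chain2[OF poly_DERIV] derivative_eq_intros) auto
  have D: "((\<lambda>z. phys_basis \<nu> ltri l1 (i,j) (\<chi> k. if k = 3 then z else q $ k)) has_field_derivative
       ltri i (p$1) (p$2) * (poly (pderiv (l1 j)) (p$3 + (q$3 - q$3) / H) * (1 / H))) (at (q$3))"
    by (rule has_field_derivative_transform_within_open[OF Dg oU qU]) (simp add: eq)
  have "pdz (phys_basis \<nu> ltri l1 (i,j)) q = ltri i (p$1) (p$2) * (poly (pderiv (l1 j)) (p$3 + (q$3 - q$3) / H) * (1 / H))"
    unfolding pdz_def by (rule DERIV_imp_deriv[OF D])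
  then show ?thesis by (simp add: q_def H_def)
qed




definition emb :: "(real^2) \<times> real \<Rightarrow> real^3" where
  "emb z = (\<chi> k. if k = 1 then fst z $ 1 else if k = 2 then fst z $ 2 else snd z)"

lemma emb_nth[simp]: "emb z $ 1 = fst z $ 1" "emb z $ 2 = fst z $ 2" "emb z $ 3 = snd z"
  by (simp_all add: emb_def)

lemma Basis_vec_eq: "(Basis :: (real^'n) set) = range (\<lambda>i. axis i 1)"
  by (auto simp: Basis_vec_def)

lemma prod_Basis_vec: "(\<Prod>b\<in>(Basis::(real^'n) set). f b) = (\<Prod>i\<in>UNIV. f (axis i 1))"
proof -
  have "inj (\<lambda>i::'n. axis i (1::real))" by (auto intro!: injI simp: axis_eq_axis)
  then show ?thesis unfolding Basis_vec_eq by (simp add: prod.reindex)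
qed

lemma cont_emb: "continuous_on UNIV emb"
  unfolding emb_def
proof (intro continuous_on_vec_lambda)
  fix i :: 3
  show "continuous_on UNIV (\<lambda>z::(real^2) \<times> real. if i = 1 then fst z $ 1 else if i = 2 then fst z $ 2 else snd z)"
    by (cases "i = 1"; cases "i = 2") (auto intro!: continuous_intros)
qed

lemma emb_measurable[measurable]: "emb \<in> borel_measurable borel"
  by (rule borel_measurable_continuous_onI[OF cont_emb])

lemma lborel_emb: "lborel = distr (lborel :: ((real^2) \<times> real) measure) borel emb"
proof (rule lborel_eqI)
  fix l u :: "real^3"
  assume le: "\<And>b. b \<in> Basis \<Longrightarrow> l \<bullet> b \<le> u \<bullet> b"
  have le': "l $ i \<le> u $ i" for i using le[of "axis i 1"] by (metis (mono_tags) Basis_vec_eq rangeI cart_eq_inner_axis)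
  define L :: "real^2" where "L = (\<chi> k. if k = 1 then l$1 else l$2)"
  define U :: "real^2" where "U = (\<chi> k. if k = 1 then u$1 else u$2)"
  have pre: "emb -` box l u = box L U \<times> {l$3 <..< u$3}"
    by (auto simp: mem_box_cart forall_2 forall_3 L_def U_def emb_def)
  have "emeasure (distr lborel borel emb) (box l u) = emeasure (lborel :: ((real^2) \<times> real) measure) (box L U \<times> {l$3 <..< u$3})"
    by (simp add: emeasure_distr pre)
  also have "\<dots> = emeasure (lborel \<Otimes>\<^sub>M lborel) (box L U \<times> {l$3 <..< u$3})"
    by (simp add: lborel_prod)
  also have "\<dots> = emeasure lborel (box L U) * emeasure lborel {l$3 <..< u$3}"
    by (simp add: lborel.emeasure_pair_measure_Times)
  also have "\<dots> = ennreal ((u$1 - l$1) * (u$2 - l$2)) * ennreal (u$3 - l$3)"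
  proof -
    have c2: "\<forall>b\<in>Basis. L \<bullet> b \<le> U \<bullet> b" using le' by (auto simp: Basis_vec_eq inner_axis L_def U_def)
    have "emeasure lborel (box L U) = ennreal (\<Prod>b\<in>Basis. (U - L) \<bullet> b)"
      unfolding emeasure_lborel_box_eq using c2 by simp
    also have "(\<Prod>b\<in>Basis. (U - L) \<bullet> b) = (u$1 - l$1) * (u$2 - l$2)"
      unfolding prod_Basis_vec UNIV_2 by (simp add: inner_axis L_def U_def)
    finally show ?thesis using le' by simp
  qed
  also have "\<dots> = (\<Prod>b\<in>Basis. (u - l) \<bullet> b)"
  proof -
    have "(\<Prod>b\<in>Basis. (u - l) \<bullet> b) = (u$1 - l$1) * (u$2 - l$2) * (u$3 - l$3)"
      unfolding prod_Basis_vec UNIV_3 by (simp add: inner_axis)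
    moreover have "ennreal ((u$1 - l$1) * (u$2 - l$2)) * ennreal (u$3 - l$3) = ennreal ((u$1 - l$1) * (u$2 - l$2) * (u$3 - l$3))"
      using le' by (simp add: ennreal_mult)
    ultimately show ?thesis by simp
  qed
  finally show "emeasure (distr lborel borel emb) (box l u) = (\<Prod>b\<in>Basis. (u - l) \<bullet> b)" .
qed simp


lemma compact_ref_tri: "compact ref_tri"
  unfolding compact_eq_bounded_closed
proof (intro conjI)
  show "bounded ref_tri"
    by (rule bounded_subset[OF bounded_cbox[of 0 1]]) (auto simp: ref_tri_def mem_box_cart forall_2)
  show "closed ref_tri" unfolding ref_tri_def
    by (intro closed_Collect_conj closed_Collect_le continuous_intros)
qed

lemma compact_ref_wedge: "compact ref_wedge"
  unfolding compact_eq_bounded_closed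
proof (intro conjI)
  show "bounded ref_wedge"
    by (rule bounded_subset[OF bounded_cbox[of 0 1]]) (auto simp: ref_wedge_def mem_box_cart forall_3)
  show "closed ref_wedge" unfolding ref_wedge_def
    by (intro closed_Collect_conj closed_Collect_le continuous_intros)
qed

lemma HK_of_lborel:
  fixes h :: "'a::euclidean_space \<Rightarrow> real"
  assumes "compact S" "continuous_on S h"
  shows "(h has_integral (\<integral>x. indicator S x * h x \<partial>lborel)) S"
proof -
  have "integrable lborel (\<lambda>x. indicator S x *\<^sub>R h x)" by (rule borel_integrable_compact[OF assms])
  from has_integral_integral_lborel[OF this]
  have "((\<lambda>x. indicator S x * h x) has_integral (\<integral>x. indicator S x * h x \<partial>lborel)) UNIV"
    by simp
  moreover have "(\<lambda>x. indicator S x * h x) = (\<lambda>x. if x \<in> S then h x else 0)"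
    by (auto simp: indicator_def)
  ultimately show ?thesis by (simp add: has_integral_restrict_UNIV)
qed

lemma wedge_fubini:
  fixes f :: "real \<Rightarrow> real \<Rightarrow> real" and g :: "real \<Rightarrow> real"
  assumes cf: "continuous_on UNIV (\<lambda>z::real\<times>real. f (fst z) (snd z))" and cg: "continuous_on UNIV g"
  shows "((\<lambda>p::real^3. f (p$1) (p$2) * g (p$3)) has_integral
          (integral ref_tri (\<lambda>q. f (q$1) (q$2)) * integral {0..1} g)) ref_wedge"
proof -
  define fq where "fq q = f (q$1) (q$2)" for q :: "real^2"
  have cfq: "continuous_on UNIV fq" unfolding fq_def
    by (rule continuous_on_compose2[OF cf, of _ "\<lambda>q. (q$1, q$2)", simplified]) (auto intro!: continuous_intros)
  define F2 where "F2 q = indicator ref_tri q * fq q" for q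
  define G where "G t = indicator {0..1::real} t * g t" for t
  define h3 where "h3 p = f (p$1) (p$2) * g (p$3)" for p :: "real^3"
  define F3 where "F3 p = indicator ref_wedge p * h3 p" for p
  have ch3: "continuous_on UNIV h3" unfolding h3_def
    by (intro continuous_intros continuous_on_compose2[OF cg, of _ "\<lambda>p. p$3", simplified]
        continuous_on_compose2[OF cf, of _ "\<lambda>p. (p$1, p$2)", simplified])
  have i2: "integral ref_tri fq = (\<integral>x. F2 x \<partial>lborel)"
    using HK_of_lborel[OF compact_ref_tri continuous_on_subset[OF cfq]] unfolding F2_def
    by (simp add: integral_unique)
  have i1: "integral {0..1} g = (\<integral>x. G x \<partial>lborel)"
    using HK_of_lborel[OF compact_Icc continuous_on_subset[OF cg], of 0 1] unfolding G_def
    by (simp add: integral_unique)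
  have h3int: "(h3 has_integral (\<integral>x. F3 x \<partial>lborel)) ref_wedge"
    using HK_of_lborel[OF compact_ref_wedge continuous_on_subset[OF ch3]] unfolding F3_def by simp
  have F3m: "F3 \<in> borel_measurable borel"
    using borel_integrable_compact[OF compact_ref_wedge continuous_on_subset[OF ch3]]
    unfolding F3_def by (simp add: borel_measurable_integrable)
  have "(\<integral>x. F3 x \<partial>lborel) = (\<integral>x. F3 x \<partial>(distr lborel borel emb))"
    by (simp flip: lborel_emb)
  also have "\<dots> = (\<integral>z. F3 (emb z) \<partial>lborel)"
    by (rule integral_distr) (auto intro: F3m)
  also have "\<dots> = (\<integral>z. F2 (fst z) * G (snd z) \<partial>lborel)"
  proof (rule Bochner_Integration.integral_cong[OF refl])
    fix z :: "(real^2) \<times> real"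
    have "emb z \<in> ref_wedge \<longleftrightarrow> fst z \<in> ref_tri \<and> snd z \<in> {0..1}"
      by (simp add: ref_wedge_def ref_tri_def)
    then show "F3 (emb z) = F2 (fst z) * G (snd z)"
      by (simp add: F3_def F2_def G_def h3_def fq_def indicator_def)
  qed
  also have "\<dots> = (\<integral>z. F2 (fst z) * G (snd z) \<partial>(lborel \<Otimes>\<^sub>M lborel))"
    by (simp add: lborel_prod)
  also have "\<dots> = (\<integral>x. (\<integral>y. F2 x * G y \<partial>lborel) \<partial>lborel)"
  proof -
    have "integrable lborel (\<lambda>z::(real^2)\<times>real. indicator (ref_tri \<times> {0..1}) z *\<^sub>R (fq (fst z) * g (snd z)))"
      by (intro borel_integrable_compact compact_Times compact_ref_tri compact_Icc
          continuous_intros continuous_on_compose2[OF cfq, of _ fst, simplified]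
          continuous_on_compose2[OF cg, of _ snd, simplified])
    also have "(\<lambda>z::(real^2)\<times>real. indicator (ref_tri \<times> {0..1}) z *\<^sub>R (fq (fst z) * g (snd z)))
        = (\<lambda>(x,y). F2 x * G y)"
      by (auto simp: F2_def G_def indicator_def fun_eq_iff)
    finally have "integrable (lborel \<Otimes>\<^sub>M lborel) (\<lambda>(x,y). F2 x * G y)"
      by (simp add: lborel_prod)
    from lborel_pair.integral_fst[OF this] show ?thesis by (simp add: case_prod_beta')
  qed
  also have "\<dots> = (\<integral>x. F2 x \<partial>lborel) * (\<integral>y. G y \<partial>lborel)"
    by simp
  finally show ?thesis using h3int i1 i2 unfolding h3_def fq_def by simp
qed



lemma finite_S2: "finite {(a,b). a + b \<le> (N::nat)}"
  by (rule finite_subset[of _ "{..N} \<times> {..N}"]) auto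

lemma poly2_cont:
  assumes "poly2_deg_le N f"
  shows "continuous_on UNIV (\<lambda>z::real\<times>real. f (fst z) (snd z))"
proof -
  obtain c where c: "\<And>r s. f r s = (\<Sum>(a,b)\<in>{(a,b). a + b \<le> N}. c a b * r ^ a * s ^ b)"
    using assms unfolding poly2_deg_le_def by blast
  have e: "(\<lambda>z::real\<times>real. f (fst z) (snd z)) = (\<lambda>z. \<Sum>x\<in>{(a,b). a + b \<le> N}. c (fst x) (snd x) * fst z ^ (fst x) * snd z ^ (snd x))"
    by (simp add: c split_def)
  have "continuous_on UNIV (\<lambda>z::real\<times>real. \<Sum>x\<in>{(a,b). a + b \<le> N}. c (fst x) (snd x) * fst z ^ (fst x) * snd z ^ (snd x))"
    by (intro continuous_intros)
  then show ?thesis unfolding e .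
qed

lemma poly1_zero_interval:
  fixes d :: "nat \<Rightarrow> real"
  assumes ab: "a < b" and z: "\<And>x. a < x \<Longrightarrow> x < b \<Longrightarrow> (\<Sum>k\<le>N. d k * x ^ k) = 0"
  shows "\<forall>k\<le>N. d k = 0"
proof -
  define p where "p = (\<Sum>k\<le>N. monom (d k) k)"
  have pe: "poly p x = (\<Sum>k\<le>N. d k * x ^ k)" for x by (simp add: p_def poly_sum poly_monom)
  have "p = 0"
  proof (rule ccontr)
    assume "p \<noteq> 0"
    then have "finite {x. poly p x = 0}" by (rule poly_roots_finite)
    moreover have "{a<..<b} \<subseteq> {x. poly p x = 0}" using z by (auto simp: pe)
    ultimately have "finite {a<..<b}" by (rule finite_subset[rotated])
    with ab show False using infinite_Ioo by blast
  qed
  then have "coeff p k = 0" for k by simp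
  then have "(if k \<le> N then d k else 0) = 0" for k by (simp add: p_def coeff_sum)
  then show ?thesis by (metis (full_types))
qed

lemma poly2_zero_box:
  assumes P: "poly2_deg_le N P" and z: "\<And>r s. 0 < r \<Longrightarrow> r < 1/2 \<Longrightarrow> 0 < s \<Longrightarrow> s < 1/2 \<Longrightarrow> P r s = (0::real)"
  shows "P r s = 0"
proof -
  obtain c where c: "\<And>r s. P r s = (\<Sum>(a,b)\<in>{(a,b). a + b \<le> N}. c a b * r ^ a * s ^ b)"
    using P unfolding poly2_deg_le_def by blast
  define c' where "c' a b = (if a + b \<le> N then c a b else 0)" for a b
  have P2: "P r s = (\<Sum>a\<le>N. (\<Sum>b\<le>N. c' a b * s ^ b) * r ^ a)" for r s
  proof -
    have "P r s = (\<Sum>(a,b)\<in>{..N} \<times> {..N}. c' a b * r ^ a * s ^ b)"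
      unfolding c c'_def by (rule sum.mono_neutral_cong_left) (auto simp: finite_S2 split: if_splits)
    also have "\<dots> = (\<Sum>a\<le>N. \<Sum>b\<le>N. c' a b * r ^ a * s ^ b)"
      by (rule sum.cartesian_product[symmetric])
    also have "\<dots> = (\<Sum>a\<le>N. (\<Sum>b\<le>N. c' a b * s ^ b) * r ^ a)"
      by (simp add: sum_distrib_right sum_distrib_left mult_ac)
    finally show ?thesis .
  qed
  have "\<forall>a\<le>N. (\<Sum>b\<le>N. c' a b * s ^ b) = 0" if "0 < s" "s < 1/2" for s
    by (rule poly1_zero_interval[of 0 "1/2"]) (use that z P2 in auto)
  then have "\<forall>b\<le>N. c' a b = 0" if "a \<le> N" for a
    using that by (intro poly1_zero_interval[of 0 "1/2"]) auto
  then show ?thesis unfolding P2 by simp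
qed

lemma poly2_lincomb:
  assumes fin: "finite I" and L: "\<forall>i\<in>I. poly2_deg_le N (L i)"
  shows "poly2_deg_le N (\<lambda>r s. \<Sum>i\<in>I. v i * L i r s)"
proof -
  from L obtain C where C: "\<forall>i\<in>I. \<forall>r s. L i r s = (\<Sum>(a,b)\<in>{(a,b). a + b \<le> N}. C i a b * r ^ a * s ^ b)"
    unfolding poly2_deg_le_def by (metis (no_types))
  have "(\<Sum>i\<in>I. v i * L i r s) = (\<Sum>(a,b)\<in>{(a,b). a + b \<le> N}. (\<Sum>i\<in>I. v i * C i a b) * r ^ a * s ^ b)" for r s
  proof -
    have "(\<Sum>i\<in>I. v i * L i r s) = (\<Sum>i\<in>I. \<Sum>(a,b)\<in>{(a,b). a + b \<le> N}. v i * (C i a b * r ^ a * s ^ b))"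
      using C by (simp add: sum_distrib_left split_def)
    also have "\<dots> = (\<Sum>(a,b)\<in>{(a,b). a + b \<le> N}. \<Sum>i\<in>I. v i * (C i a b * r ^ a * s ^ b))"
      by (subst sum.swap) (simp add: split_def)
    also have "\<dots> = (\<Sum>(a,b)\<in>{(a,b). a + b \<le> N}. (\<Sum>i\<in>I. v i * C i a b) * r ^ a * s ^ b)"
      by (simp add: sum_distrib_right sum_distrib_left mult_ac split_def)
    finally show ?thesis .
  qed
  then show ?thesis unfolding poly2_deg_le_def by (intro exI[of _ "\<lambda>a b. \<Sum>i\<in>I. v i * C i a b"]) blast
qed




lemma tt_mono:
  assumes g: "gll_points N tt" and ik: "i < k" and kN: "k \<le> N"
  shows "tt i < tt k"
  using ik kN
proof (induction k)
  case 0 then show ?case by simp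
next
  case (Suc k)
  have st: "tt k < tt (Suc k)" using g Suc.prems unfolding gll_points_def by auto
  show ?case
  proof (cases "i = k")
    case True then show ?thesis using st by simp
  next
    case False then have "tt i < tt k" using Suc by simp
    then show ?thesis using st by simp
  qed
qed

lemma tt_range:
  assumes g: "gll_points N tt" and kN: "k \<le> N"
  shows "0 \<le> tt k" "tt k \<le> 1"
proof -
  have "tt 0 = 0" "tt N = 1" using g by (auto simp: gll_points_def)
  then show "0 \<le> tt k" "tt k \<le> 1"
    using tt_mono[OF g, of 0 k] tt_mono[OF g, of k N] kN by (cases "k = 0"; cases "k = N"; auto)+
qed

lemma tt_inj:
  assumes g: "gll_points N tt"
  shows "inj_on tt {0..N}"
proof (rule inj_onI)
  fix i k assume "i \<in> {0..N}" "k \<in> {0..N}" "tt i = tt k"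
  then show "i = k" using tt_mono[OF g, of i k] tt_mono[OF g, of k i]
    by (cases i k rule: linorder_cases) auto
qed

lemma interp:
  fixes p :: "real poly"
  assumes g: "gll_points N tt" and lag: "lagrange_1d N tt l1" and dp: "degree p \<le> N"
  shows "poly p t = (\<Sum>m\<in>{0..N}. poly p (tt m) * poly (l1 m) t)"
proof -
  define q where "q = p - (\<Sum>m\<in>{0..N}. Polynomial.smult (poly p (tt m)) (l1 m))"
  have dq: "degree q \<le> N"
    unfolding q_def using dp lag
    by (intro degree_diff_le degree_sum_le) (auto simp: lagrange_1d_def intro: order.trans[OF degree_smult_le])
  have rq: "poly q (tt k) = 0" if k: "k \<in> {0..N}" for k
  proof -
    have "(\<Sum>m\<in>{0..N}. poly p (tt m) * poly (l1 m) (tt k)) = (\<Sum>m\<in>{0..N}. if m = k then poly p (tt m) else 0)"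
      using lag k by (intro sum.cong) (auto simp: lagrange_1d_def)
    also have "\<dots> = poly p (tt k)" using k by simp
    finally show ?thesis by (simp add: q_def poly_sum)
  qed
  have "q = 0"
  proof (rule ccontr)
    assume q0: "q \<noteq> 0"
    have "tt ` {0..N} \<subseteq> {x. poly q x = 0}" using rq by auto
    then have "card (tt ` {0..N}) \<le> card {x. poly q x = 0}"
      by (intro card_mono poly_roots_finite[OF q0])
    also have "\<dots> \<le> degree q" by (rule card_poly_roots_bound[OF q0])
    finally have "N + 1 \<le> N" using dq card_image[OF tt_inj[OF g]] by simp
    then show False by simp
  qed
  then have "p = (\<Sum>m\<in>{0..N}. Polynomial.smult (poly p (tt m)) (l1 m))" by (simp add: q_def)
  then have "poly p t = poly (\<Sum>m\<in>{0..N}. Polynomial.smult (poly p (tt m)) (l1 m)) t" by (rule arg_cong)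
  then show ?thesis by (simp add: poly_sum)
qed

lemma gram_quad:
  fixes h :: "'i \<Rightarrow> 'a::euclidean_space \<Rightarrow> real"
  assumes fin: "finite I" and int: "\<And>a b. a \<in> I \<Longrightarrow> b \<in> I \<Longrightarrow> (\<lambda>x. h a x * h b x * w x) integrable_on S"
  shows "(\<Sum>a\<in>I. v a * (\<Sum>b\<in>I. integral S (\<lambda>x. h a x * h b x * w x) * v b))
         = integral S (\<lambda>x. (\<Sum>a\<in>I. v a * h a x)\<^sup>2 * w x)"
proof -
  have e: "(\<lambda>x. (\<Sum>a\<in>I. v a * h a x)\<^sup>2 * w x) = (\<lambda>x. \<Sum>a\<in>I. \<Sum>b\<in>I. v a * v b * (h a x * h b x * w x))"
  proof
    fix x
    have "(\<Sum>a\<in>I. v a * h a x)\<^sup>2 * w x = (\<Sum>a\<in>I. \<Sum>b\<in>I. (v a * h a x) * (v b * h b x)) * w x"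
      by (simp add: power2_eq_square sum_product)
    also have "\<dots> = (\<Sum>a\<in>I. \<Sum>b\<in>I. (v a * h a x) * (v b * h b x) * w x)"
      by (simp add: sum_distrib_right)
    also have "\<dots> = (\<Sum>a\<in>I. \<Sum>b\<in>I. v a * v b * (h a x * h b x * w x))"
      by (simp add: mult_ac)
    finally show "(\<Sum>a\<in>I. v a * h a x)\<^sup>2 * w x = (\<Sum>a\<in>I. \<Sum>b\<in>I. v a * v b * (h a x * h b x * w x))" .
  qed
  have ii: "(\<lambda>x. v a * v b * (h a x * h b x * w x)) integrable_on S" if "a \<in> I" "b \<in> I" for a b
    using integrable_on_cmult_left[OF int[OF that], of "v a * v b"] by simp
  have "integral S (\<lambda>x. \<Sum>a\<in>I. \<Sum>b\<in>I. v a * v b * (h a x * h b x * w x))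
      = (\<Sum>a\<in>I. integral S (\<lambda>x. \<Sum>b\<in>I. v a * v b * (h a x * h b x * w x)))"
    using fin ii by (intro integral_sum) (auto intro!: integrable_sum)
  also have "\<dots> = (\<Sum>a\<in>I. \<Sum>b\<in>I. integral S (\<lambda>x. v a * v b * (h a x * h b x * w x)))"
    using fin ii by (intro sum.cong refl integral_sum) auto
  also have "\<dots> = (\<Sum>a\<in>I. \<Sum>b\<in>I. v a * v b * integral S (\<lambda>x. h a x * h b x * w x))"
    by simp
  also have "\<dots> = (\<Sum>a\<in>I. v a * (\<Sum>b\<in>I. integral S (\<lambda>x. h a x * h b x * w x) * v b))"
    by (simp add: sum_distrib_left mult_ac)
  finally show ?thesis unfolding e by simp
qed




lemma cont_tri_fun:
  assumes "continuous_on UNIV (\<lambda>z::real\<times>real. f (fst z) (snd z))"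
  shows "continuous_on S (\<lambda>q::real^2. f (q$1) (q$2))"
  by (rule continuous_on_compose2[OF assms, of _ "\<lambda>q. (q$1, q$2)", simplified]) (auto intro!: continuous_intros)

lemma M1_inj:
  assumes g: "gll_points N tt" and lag: "lagrange_1d N tt l1"
    and v: "\<forall>a\<in>{0..N}. (\<Sum>b\<in>{0..N}. integral {0..1} (\<lambda>t. poly (l1 a) t * poly (l1 b) t) * v b) = 0"
  shows "\<forall>b\<in>{0..N}. v b = (0::real)"
proof -
  define P where "P t = (\<Sum>a\<in>{0..N}. v a * poly (l1 a) t)" for t
  have "(\<Sum>a\<in>{0..N}. v a * (\<Sum>b\<in>{0..N}. integral {0..1} (\<lambda>t. poly (l1 a) t * poly (l1 b) t * 1) * v b))
      = integral {0..1} (\<lambda>t. (\<Sum>a\<in>{0..N}. v a * poly (l1 a) t)\<^sup>2 * 1)"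
    by (rule gram_quad) (auto intro!: integrable_continuous_real continuous_intros)
  then have "integral {0..1} (\<lambda>t. (P t)\<^sup>2) = 0" using v by (simp add: P_def)
  then have z: "\<forall>t\<in>{0..1}. (P t)\<^sup>2 = 0"
    by (subst integral_eq_0_iff[symmetric]) (auto simp: P_def intro!: continuous_intros)
  show ?thesis
  proof
    fix k assume k: "k \<in> {0..N}"
    have "P (tt k) = (\<Sum>a\<in>{0..N}. if a = k then v a else 0)"
      unfolding P_def using lag k by (intro sum.cong) (auto simp: lagrange_1d_def)
    also have "\<dots> = v k" using k by simp
    finally have "P (tt k) = v k" .
    moreover have "tt k \<in> {0..1}" using tt_range[OF g] k by auto
    ultimately show "v k = 0" using z by auto
  qed
qed

lemma Mt_inj:
  fixes w :: "real^2 \<Rightarrow> real"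
  assumes lag: "lagrange_tri N pr ps ltri"
    and cw: "continuous_on ref_tri w" and wpos: "\<And>q. q \<in> ref_tri \<Longrightarrow> w q > 0"
    and v: "\<forall>a\<in>{1..ntri N}. (\<Sum>b\<in>{1..ntri N}. integral ref_tri (\<lambda>q. ltri a (q$1) (q$2) * ltri b (q$1) (q$2) * w q) * v b) = 0"
  shows "\<forall>b\<in>{1..ntri N}. v b = (0::real)"
proof -
  let ?I = "{1..ntri N}"
  define P where "P r s = (\<Sum>a\<in>?I. v a * ltri a r s)" for r s
  have polyP: "poly2_deg_le N P" unfolding P_def
    using lag by (intro poly2_lincomb) (auto simp: lagrange_tri_def)
  have cl: "continuous_on ref_tri (\<lambda>q::real^2. ltri a (q$1) (q$2))" if "a \<in> ?I" for a
    using lag that by (intro cont_tri_fun poly2_cont) (auto simp: lagrange_tri_def)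
  have cP: "continuous_on ref_tri (\<lambda>q::real^2. P (q$1) (q$2))"
    by (rule cont_tri_fun[OF poly2_cont[OF polyP]])
  define F where "F q = (P (q$1) (q$2))\<^sup>2 * w q" for q :: "real^2"
  have cF: "continuous_on ref_tri F" unfolding F_def by (intro continuous_intros cP cw)
  have intF: "F integrable_on ref_tri"
    using HK_of_lborel[OF compact_ref_tri cF] by blast
  have "(\<Sum>a\<in>?I. v a * (\<Sum>b\<in>?I. integral ref_tri (\<lambda>q. ltri a (q$1) (q$2) * ltri b (q$1) (q$2) * w q) * v b))
      = integral ref_tri (\<lambda>q. (\<Sum>a\<in>?I. v a * ltri a (q$1) (q$2))\<^sup>2 * w q)"
  proof (rule gram_quad)
    fix a b assume "a \<in> ?I" "b \<in> ?I"
    then have "continuous_on ref_tri (\<lambda>q. ltri a (q$1) (q$2) * ltri b (q$1) (q$2) * w q)"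
      by (intro continuous_intros cl cw)
    then show "(\<lambda>q. ltri a (q$1) (q$2) * ltri b (q$1) (q$2) * w q) integrable_on ref_tri"
      using HK_of_lborel[OF compact_ref_tri] by blast
  qed simp
  then have int0: "integral ref_tri F = 0" using v by (simp add: P_def F_def[abs_def])
  have Fnn: "F q \<ge> 0" if "q \<in> ref_tri" for q using wpos[OF that] by (simp add: F_def)
  define B :: "(real^2) set" where "B = cbox 0 (\<chi> k. 1/2)"
  have BT: "B \<subseteq> ref_tri" by (auto simp: B_def ref_tri_def mem_box_cart forall_2)
  have intB: "F integrable_on B" using integrable_on_subcbox intF
    by (metis B_def BT continuous_on_subset cF integrable_continuous)
  have "integral B F \<le> integral ref_tri F"
    by (rule integral_subset_le[OF BT intB intF]) (use Fnn in auto)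
  moreover have "integral B F \<ge> 0" using Fnn BT by (intro integral_nonneg intB) auto
  ultimately have "integral B F = 0" using int0 by simp
  then have hB: "(F has_integral 0) (cbox 0 (\<chi> k. 1/2))" using intB unfolding B_def
    by (metis has_integral_integral)
  have zB: "P r s = 0" if "0 < r" "r < 1/2" "0 < s" "s < 1/2" for r s
  proof -
    define q :: "real^2" where "q = (\<chi> k. if k = 1 then r else s)"
    have q1: "q$1 = r" and q2: "q$2 = s" by (simp_all add: q_def)
    have qB: "q \<in> cbox 0 (\<chi> k. 1/2)" using that by (auto simp: mem_box_cart forall_2 q1 q2)
    have "F q = 0"
    proof (rule has_integral_0_cbox_imp_0[OF _ _ hB _ qB])
      show "continuous_on (cbox 0 (\<chi> k. 1/2)) F" using cF BT unfolding B_def by (rule continuous_on_subset)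
      show "\<And>x. x \<in> box 0 (\<chi> k. 1/2) \<Longrightarrow> 0 \<le> F x" using Fnn BT box_subset_cbox unfolding B_def by blast
      have "(\<chi> k. 1/4) \<in> box (0::real^2) (\<chi> k. 1/2)" by (auto simp: mem_box_cart)
      then show "box (0::real^2) (\<chi> k. 1/2) \<noteq> {}" by blast
    qed
    moreover have "w q > 0" using wpos BT qB unfolding B_def by blast
    ultimately show ?thesis by (simp add: F_def q1 q2)
  qed
  have P0: "P r s = 0" for r s by (rule poly2_zero_box[OF polyP zB])
  show ?thesis
  proof
    fix k assume k: "k \<in> ?I"
    have "P (pr k) (ps k) = (\<Sum>a\<in>?I. if a = k then v a else 0)"
      unfolding P_def using lag k by (intro sum.cong) (auto simp: lagrange_tri_def)
    also have "\<dots> = v k" using k by simp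
    finally show "v k = 0" using P0 by simp
  qed
qed




lemma minv_is_minv:
  assumes "\<exists>B. is_minv I A B"
  shows "is_minv I A (minv I A)"
proof -
  define B0 where "B0 = (SOME B. is_minv I A B)"
  have s: "is_minv I A B0" using assms unfolding B0_def by (rule someI_ex)
  have e: "mprod I X (minv I A) a c = mprod I X B0 a c"
    "mprod I (minv I A) X a c = mprod I B0 X a c" if "a \<in> I" "c \<in> I" for X a c
    using that unfolding mprod_def minv_def B0_def by (auto intro!: sum.cong)
  show ?thesis using s unfolding is_minv_def by (simp add: e)
qed

lemma K_eq:
  assumes g: "gll_points N tt" and lag: "lagrange_1d N tt l1" and j: "j \<in> {0..N}" and j': "j' \<in> {0..N}"
  shows "integral {0..1} (\<lambda>t. poly (l1 j) t * poly (pderiv (l1 j')) t)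
    = mprod {0..N} (\<lambda>a b. integral {0..1} (\<lambda>t. poly (l1 a) t * poly (l1 b) t)) (D1d tt l1) j j'"
proof -
  have "degree (l1 j') \<le> N" using lag j' by (auto simp: lagrange_1d_def)
  then have dg: "degree (pderiv (l1 j')) \<le> N" by (simp add: degree_pderiv)
  have "mprod {0..N} (\<lambda>a b. integral {0..1} (\<lambda>t. poly (l1 a) t * poly (l1 b) t)) (D1d tt l1) j j'
      = (\<Sum>m\<in>{0..N}. integral {0..1} (\<lambda>t. poly (l1 j) t * poly (l1 m) t * poly (pderiv (l1 j')) (tt m)))"
    unfolding mprod_def D1d_def by simp
  also have "\<dots> = integral {0..1} (\<lambda>t. \<Sum>m\<in>{0..N}. poly (l1 j) t * poly (l1 m) t * poly (pderiv (l1 j')) (tt m))"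
    by (rule integral_sum[symmetric]) (auto intro!: integrable_continuous_real continuous_intros)
  also have "\<dots> = integral {0..1} (\<lambda>t. poly (l1 j) t * poly (pderiv (l1 j')) t)"
  proof (rule integral_cong)
    fix t
    have "poly (pderiv (l1 j')) t = (\<Sum>m\<in>{0..N}. poly (pderiv (l1 j')) (tt m) * poly (l1 m) t)"
      by (rule interp[OF g lag dg])
    then show "(\<Sum>m\<in>{0..N}. poly (l1 j) t * poly (l1 m) t * poly (pderiv (l1 j')) (tt m))
        = poly (l1 j) t * poly (pderiv (l1 j')) t"
      by (simp add: sum_distrib_left mult_ac)
  qed
  finally show ?thesis by simp
qed



theorem mainTheorem6:
  fixes N :: nat and \<nu> :: "nat \<Rightarrow> real^3"
    and pr ps :: "nat \<Rightarrow> real" and ltri :: "nat \<Rightarrow> real \<Rightarrow> real \<Rightarrow> real"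
    and tt :: "nat \<Rightarrow> real" and l1 :: "nat \<Rightarrow> real poly"
  assumes "N \<ge> 1"
    and "vertically_mapped \<nu>"
    and "\<forall>p\<in>ref_wedge. wedge_J \<nu> p > 0"
    and "unisolvent_tri N pr ps" and "lagrange_tri N pr ps ltri"
    and "gll_points N tt" and "lagrange_1d N tt l1"
  shows "\<exists>c::real. (\<forall>p\<in>ref_wedge. geo_tz \<nu> p * wedge_J \<nu> p = c) \<and>
    (\<forall>a\<in>wedge_idx N. \<forall>b\<in>wedge_idx N.
       mprod (wedge_idx N) (minv (wedge_idx N) (mass_wedge \<nu> ltri l1)) (stiff_z \<nu> ltri l1) a b
       = kron (mprod {1..ntri N} (minv {1..ntri N} (mass_tri \<nu> ltri)) (mass_ref_tri ltri))
              (\<lambda>j j'. c * D1d tt l1 j j') a b)"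
proof -
  note vm = assms(2) and Jpos = assms(3) and lagt = assms(5) and g = assms(6) and lag1 = assms(7)
  define c where "c = detB \<nu>"
  define I where "I = {1..ntri N}"
  define Jx where "Jx = {0..N}"
  have WI: "wedge_idx N = I \<times> Jx" by (simp add: wedge_idx_def I_def Jx_def)
  have finI: "finite I" and finJ: "finite Jx" by (simp_all add: I_def Jx_def)
  have part1: "\<forall>p\<in>ref_wedge. geo_tz \<nu> p * wedge_J \<nu> p = c"
  proof
    fix p assume p: "p \<in> ref_wedge"
    have H: "hh \<nu> (p$1) (p$2) \<noteq> 0" using hh_ne0[OF vm Jpos] p by (simp add: ref_wedge_def)
    have "wedge_J \<nu> p \<noteq> 0" using Jpos p by force
    then show "geo_tz \<nu> p * wedge_J \<nu> p = c"
      using H by (simp add: geo_tz_eq[OF vm] wedge_J_eq[OF vm] c_def)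
  qed
  define Mt where "Mt = mass_tri \<nu> ltri"
  define Mh where "Mh = mass_ref_tri ltri"
  define M1 where "M1 = (\<lambda>a b. integral {0..1} (\<lambda>t. poly (l1 a) t * poly (l1 b) t))"
  define K where "K = (\<lambda>a b. integral {0..1} (\<lambda>t. poly (l1 a) t * poly (pderiv (l1 b)) t))"
  have Jtri: "wedge_J \<nu> (vector [q$1, q$2, 0]) = detB \<nu> * hh \<nu> (q$1) (q$2)" for q :: "real^2"
    by (simp add: wedge_J_eq[OF vm])
  have contl: "continuous_on UNIV (\<lambda>z::real\<times>real. ltri i (fst z) (snd z))" if "i \<in> I" for i
    using lagt that by (intro poly2_cont) (auto simp: lagrange_tri_def I_def)
  have conthh: "continuous_on UNIV (\<lambda>z::real\<times>real. hh \<nu> (fst z) (snd z))"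
    unfolding hh_def by (intro continuous_intros)
  have cpoly: "continuous_on UNIV (\<lambda>t. poly p t)" for p :: "real poly"
    by (intro continuous_intros)
  have MW: "mass_wedge \<nu> ltri l1 (i,j) (i',j') = Mt i i' * M1 j j'" if "i \<in> I" "i' \<in> I" for i i' j j'
  proof -
    define F where "F r s = ltri i r s * ltri i' r s * (detB \<nu> * hh \<nu> r s)" for r s
    define G where "G t = poly (l1 j) t * poly (l1 j') t" for t
    have cF: "continuous_on UNIV (\<lambda>z::real\<times>real. F (fst z) (snd z))"
      unfolding F_def by (intro continuous_intros contl that conthh)
    have cG: "continuous_on UNIV G" unfolding G_def by (intro continuous_intros)
    have "mass_wedge \<nu> ltri l1 (i,j) (i',j') = integral ref_wedge (\<lambda>p. F (p$1) (p$2) * G (p$3))"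
      unfolding mass_wedge_def F_def G_def lwedge_def
      by (intro integral_cong) (simp add: wedge_J_eq[OF vm] mult_ac)
    also have "\<dots> = integral ref_tri (\<lambda>q. F (q$1) (q$2)) * integral {0..1} G"
      by (rule integral_unique[OF wedge_fubini[OF cF cG]])
    also have "integral ref_tri (\<lambda>q. F (q$1) (q$2)) = Mt i i'"
      unfolding Mt_def mass_tri_def F_def Jtri ..
    finally show ?thesis by (simp add: M1_def G_def)
  qed
  have SW: "stiff_z \<nu> ltri l1 (i,j) (i',j') = (c * Mh i i') * K j j'" if "i \<in> I" "i' \<in> I" for i i' j j'
  proof -
    define F where "F r s = detB \<nu> * (ltri i r s * ltri i' r s)" for r s
    define G where "G t = poly (l1 j) t * poly (pderiv (l1 j')) t" for t
    have cF: "continuous_on UNIV (\<lambda>z::real\<times>real. F (fst z) (snd z))"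
      unfolding F_def by (intro continuous_intros contl that)
    have cG: "continuous_on UNIV G" unfolding G_def by (intro continuous_intros)
    have neg: "negligible ({p::real^3. p$3 = 0} \<union> {p. p$3 = 1})"
    proof (rule negligible_Un)
      show "negligible {p::real^3. p$3 = 0}" by (rule negligible_standard_hyperplane_cart)
      have "negligible {p::real^3. axis 3 1 \<bullet> p = 1}" by (rule negligible_hyperplane) simp
      moreover have "{p::real^3. axis 3 1 \<bullet> p = 1} = {p. p$3 = 1}" by (auto simp: inner_axis')
      ultimately show "negligible {p::real^3. p$3 = 1}" by simp
    qed
    have "stiff_z \<nu> ltri l1 (i,j) (i',j') = integral ref_wedge (\<lambda>p. F (p$1) (p$2) * G (p$3))"
      unfolding stiff_z_def
    proof (rule integral_spike[OF neg])
      fix p assume p: "p \<in> ref_wedge - ({p::real^3. p$3 = 0} \<union> {p. p$3 = 1})"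
      then have pW: "p \<in> ref_wedge" and t0: "0 < p$3" and t1: "p$3 < 1"
        by (auto simp: ref_wedge_def)
      have H: "hh \<nu> (p$1) (p$2) \<noteq> 0" using hh_ne0[OF vm Jpos] pW by (simp add: ref_wedge_def)
      show "F (p$1) (p$2) * G (p$3) = pdz (phys_basis \<nu> ltri l1 (i',j')) (wedge_map \<nu> p) * lwedge ltri l1 (i,j) p * wedge_J \<nu> p"
        using H by (simp add: pdz_phys[OF vm Jpos pW t0 t1] wedge_J_eq[OF vm] lwedge_def F_def G_def field_simps)
    qed
    also have "\<dots> = integral ref_tri (\<lambda>q. F (q$1) (q$2)) * integral {0..1} G"
      by (rule integral_unique[OF wedge_fubini[OF cF cG]])
    also have "integral ref_tri (\<lambda>q. F (q$1) (q$2)) = c * Mh i i'"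
      unfolding F_def Mh_def mass_ref_tri_def c_def by simp
    finally show ?thesis by (simp add: K_def G_def)
  qed
  have cw: "continuous_on ref_tri (\<lambda>q::real^2. wedge_J \<nu> (vector [q$1, q$2, 0]))"
  proof -
    have "continuous_on ref_tri (\<lambda>q::real^2. detB \<nu> * hh \<nu> (q$1) (q$2))"
      by (rule cont_tri_fun) (intro continuous_intros conthh)
    then show ?thesis by (simp add: Jtri)
  qed
  have wpos: "wedge_J \<nu> (vector [q$1, q$2, 0]) > 0" if "q \<in> ref_tri" for q :: "real^2"
  proof -
    have "(vector [q$1, q$2, 0] :: real^3) \<in> ref_wedge" using that by (simp add: ref_wedge_def ref_tri_def)
    then show ?thesis using Jpos by blast
  qed
  have invMt: "is_minv I Mt (minv I Mt)"
  proof (rule minv_is_minv, rule minv_exists[OF finI])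
    fix v :: "nat \<Rightarrow> real" assume "\<forall>a\<in>I. (\<Sum>b\<in>I. Mt a b * v b) = 0"
    then show "\<forall>b\<in>I. v b = 0" unfolding I_def Mt_def mass_tri_def
      using Mt_inj[OF lagt cw wpos, of v] by blast
  qed
  have invM1: "is_minv Jx M1 (minv Jx M1)"
  proof (rule minv_is_minv, rule minv_exists[OF finJ])
    fix v :: "nat \<Rightarrow> real" assume "\<forall>a\<in>Jx. (\<Sum>b\<in>Jx. M1 a b * v b) = 0"
    then show "\<forall>b\<in>Jx. v b = 0" unfolding Jx_def M1_def
      by (rule M1_inj[OF g lag1])
  qed
  have invK: "is_minv (I \<times> Jx) (kron Mt M1) (kron (minv I Mt) (minv Jx M1))"
    by (rule is_minv_kron[OF finI finJ invMt invM1])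
  have mwk: "minv (I \<times> Jx) (mass_wedge \<nu> ltri l1) = minv (I \<times> Jx) (kron Mt M1)"
    by (rule minv_cong) (auto simp: kron_def MW)
  have minvW: "minv (wedge_idx N) (mass_wedge \<nu> ltri l1) a b = kron (minv I Mt) (minv Jx M1) a b"
    if "a \<in> wedge_idx N" "b \<in> wedge_idx N" for a b
    unfolding WI mwk using minv_eq[OF finite_cartesian_product[OF finI finJ] invK] that WI by simp
  have DK: "mprod Jx (minv Jx M1) K j j' = D1d tt l1 j j'" if j: "j \<in> Jx" and j': "j' \<in> Jx" for j j'
  proof -
    have "mprod Jx (minv Jx M1) K j j' = mprod Jx (minv Jx M1) (mprod Jx M1 (D1d tt l1)) j j'"
      by (rule mprod_cong) (use j' K_eq[OF g lag1] in \<open>auto simp: K_def M1_def Jx_def\<close>)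
    also have "\<dots> = mprod Jx (mprod Jx (minv Jx M1) M1) (D1d tt l1) j j'"
      by (rule mprod_assoc[OF finJ, symmetric])
    also have "\<dots> = (\<Sum>b\<in>Jx. (if j = b then D1d tt l1 b j' else 0))"
      unfolding mprod_def[of Jx "mprod Jx (minv Jx M1) M1"]
      using invM1 j by (intro sum.cong) (auto simp: is_minv_def)
    also have "\<dots> = D1d tt l1 j j'" using j finJ by simp
    finally show ?thesis .
  qed
  show ?thesis
  proof (intro exI[of _ c] conjI part1 ballI)
    fix a b assume a: "a \<in> wedge_idx N" and b: "b \<in> wedge_idx N"
    then obtain i j i' j' where ab: "a = (i,j)" "b = (i',j')" and ij: "i \<in> I" "j \<in> Jx" "i' \<in> I" "j' \<in> Jx"
      unfolding WI by auto
    have "mprod (wedge_idx N) (minv (wedge_idx N) (mass_wedge \<nu> ltri l1)) (stiff_z \<nu> ltri l1) a b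
        = mprod (I \<times> Jx) (kron (minv I Mt) (minv Jx M1)) (kron (\<lambda>i i'. c * Mh i i') K) (i,j) (i',j')"
      unfolding WI ab
    proof (rule mprod_cong)
      fix d assume d: "d \<in> I \<times> Jx"
      show "minv (I \<times> Jx) (mass_wedge \<nu> ltri l1) (i, j) d = kron (minv I Mt) (minv Jx M1) (i, j) d"
        using minvW[of "(i,j)" d] d ij WI by simp
      show "stiff_z \<nu> ltri l1 d (i', j') = kron (\<lambda>i i'. c * Mh i i') K d (i', j')"
        using d ij by (auto simp: kron_def SW)
    qed
    also have "\<dots> = mprod I (minv I Mt) (\<lambda>i i'. c * Mh i i') i i' * mprod Jx (minv Jx M1) K j j'"
      by (rule mprod_kron[OF finI finJ])
    also have "\<dots> = mprod I (minv I Mt) Mh i i' * (c * D1d tt l1 j j')"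
      using DK[OF ij(2) ij(4)] by (simp add: mprod_def sum_distrib_left mult_ac)
    also have "\<dots> = kron (mprod {1..ntri N} (minv {1..ntri N} (mass_tri \<nu> ltri)) (mass_ref_tri ltri))
              (\<lambda>j j'. c * D1d tt l1 j j') a b"
      by (simp add: ab kron_def I_def Mt_def Mh_def)
    finally show "mprod (wedge_idx N) (minv (wedge_idx N) (mass_wedge \<nu> ltri l1)) (stiff_z \<nu> ltri l1) a b
       = kron (mprod {1..ntri N} (minv {1..ntri N} (mass_tri \<nu> ltri)) (mass_ref_tri ltri))
              (\<lambda>j j'. c * D1d tt l1 j j') a b" .
  qed
qed


end
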